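(* Fix $\mu_0\neq\mu_1$ such that private beliefs are unbounded from below, i.e.\ for every $\epsilon>0$, $\mathbb{P}(B_u<\epsilon)>0$. Then there is a sequence $q(n)=q(n,\mu_0,\mu_1)$, depending only on $\mu_0,\mu_1$, with $q(n)\to1$ as $n\to\infty$, such that the following holds: for every finite set $V$ of $n$ agents with private signals and information $\sigma$-algebras as in the context, having common knowledge of actions (for all $u,w\in V$, $L_u$ is a.s.\ $\mathcal{F}_w$-measurable) and a common optimal action set $L$ with $L=L_u$ almost surely for all $u\in V$, we have $$\mathbb{P}(L=\{0\}\mid S=0)\ge q(n).$$
   Context: The state $S$ is uniform on $\{0,1\}$. $\mu_0\neq\mu_1$ are probability measures on a measurable space $(\Omega,\mathcal{O})$ (the Radon–Nikodym derivative $d\mu_1/d\mu_0$ is assumed to exist). $V$ is a finite set of agents; agent $u$ has a private signal $W_u$, and conditionally on $S$ the signals are i.i.d.\ with law $\mu_S$. The private belief is $B_u=\mathbb{P}(S=1\mid W_u)$. Each agent has information $\sigma$-algebra $\mathcal{F}_u$ with $\sigma(W_u)\subseteq\mathcal{F}_u\subseteq\sigma(W_v:v\in V)$; posterior belief $X_u=\mathbb{P}(S=1\mid\mathcal{F}_u)$; posterior optimal action set $L_u=\{0\}$ if $X_u<1/2$, $\{1\}$ if $X_u>1/2$, $\{0,1\}$ if $X_u=1/2$. *)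

theory Defs
  imports "HOL-Probability.Probability"
begin

text \<open>The outcome space is bool \<times> (nat \<Rightarrow> 'a): the first component is the
  state S (True = state 1), the second the vector of private signals (W_u) indexed by the
  agents u \<in> V \<subseteq> nat.\<close>

definition joint :: "'a measure \<Rightarrow> 'a measure \<Rightarrow> nat set \<Rightarrow> (bool \<times> (nat \<Rightarrow> 'a)) measure" where
  "joint \<mu>0 \<mu>1 V =
     bind (measure_pmf (pmf_of_set (UNIV :: bool set)))
       (\<lambda>s. distr (\<Pi>\<^sub>M v\<in>V. (if s then \<mu>1 else \<mu>0))
                  (count_space UNIV \<Otimes>\<^sub>M (\<Pi>\<^sub>M v\<in>V. \<mu>0)) (\<lambda>w. (s, w)))"

definition state :: "bool \<times> (nat \<Rightarrow> 'a) \<Rightarrow> bool" where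
  "state \<omega> = fst \<omega>"

definition signal :: "nat \<Rightarrow> bool \<times> (nat \<Rightarrow> 'a) \<Rightarrow> 'a" where
  "signal u \<omega> = snd \<omega> u"

definition sig_signal :: "'a measure \<Rightarrow> 'a measure \<Rightarrow> nat set \<Rightarrow> nat \<Rightarrow> (bool \<times> (nat \<Rightarrow> 'a)) measure" where
  "sig_signal \<mu>0 \<mu>1 V u = vimage_algebra (space (joint \<mu>0 \<mu>1 V)) (signal u) \<mu>0"

definition sig_all_signals :: "'a measure \<Rightarrow> 'a measure \<Rightarrow> nat set \<Rightarrow> (bool \<times> (nat \<Rightarrow> 'a)) measure" where
  "sig_all_signals \<mu>0 \<mu>1 V =
     sigma (space (joint \<mu>0 \<mu>1 V)) (\<Union>v\<in>V. sets (sig_signal \<mu>0 \<mu>1 V v))"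

definition post_belief ::
  "'a measure \<Rightarrow> 'a measure \<Rightarrow> nat set \<Rightarrow> (bool \<times> (nat \<Rightarrow> 'a)) measure \<Rightarrow> bool \<times> (nat \<Rightarrow> 'a) \<Rightarrow> real" where
  "post_belief \<mu>0 \<mu>1 V F =
     real_cond_exp (joint \<mu>0 \<mu>1 V) F (indicator {\<omega>. state \<omega>})"

text \<open>Private belief B = P(S = 1 | W) of an agent (computed in the one-agent model, agent 0;
  its law does not depend on the agent).\<close>
definition priv_belief :: "'a measure \<Rightarrow> 'a measure \<Rightarrow> bool \<times> (nat \<Rightarrow> 'a) \<Rightarrow> real" where
  "priv_belief \<mu>0 \<mu>1 = post_belief \<mu>0 \<mu>1 {0} (sig_signal \<mu>0 \<mu>1 {0} 0)"

definition opt_actions :: "real \<Rightarrow> nat set" where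
  "opt_actions x = (if x < 1/2 then {0} else if x > 1/2 then {1} else {0, 1})"

definition info_algebra ::
  "'a measure \<Rightarrow> 'a measure \<Rightarrow> nat set \<Rightarrow> nat \<Rightarrow> (bool \<times> (nat \<Rightarrow> 'a)) measure \<Rightarrow> bool" where
  "info_algebra \<mu>0 \<mu>1 V u F \<longleftrightarrow>
     space F = space (joint \<mu>0 \<mu>1 V) \<and>
     sets (sig_signal \<mu>0 \<mu>1 V u) \<subseteq> sets F \<and>
     sets F \<subseteq> sets (sig_all_signals \<mu>0 \<mu>1 V)"

end

theory Submission
  imports Defs
begin


lemma one_le_tk: fixes t :: real assumes "0 \<le> t" "t \<le> 1" shows "1 \<le> t * real k + (1 - t) ^ k"
  using Bernoulli_inequality[of "-t" k] assms by (simp add: mult.commute)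

lemma core_bound:
  fixes \<mu> :: "'a measure" and V :: "'i set"
  assumes mu: "prob_space \<mu>" and V: "finite V"
    and D: "D \<in> sets (PiM V (\<lambda>_. \<mu>))" and E: "E \<in> sets \<mu>" and t: "0 \<le> t" "t \<le> 1"
    and a: "\<And>u. u \<in> V \<Longrightarrow> measure (PiM V (\<lambda>_. \<mu>)) (D \<inter> {x\<in>space (PiM V (\<lambda>_. \<mu>)). x u \<in> E}) \<le> a"
  shows "measure (PiM V (\<lambda>_. \<mu>)) D \<le> t * real (card V) * a + (1 - t * measure \<mu> E) ^ card V"
proof -
  let ?P = "PiM V (\<lambda>_. \<mu>)"
  interpret M: prob_space \<mu> by (rule mu)
  interpret PP: product_prob_space "\<lambda>_. \<mu>" V
    by (simp add: product_prob_space_def product_prob_space_axioms_def product_sigma_finite_def mu M.sigma_finite_measure_axioms)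

  let ?C = "\<lambda>u. D \<inter> {x\<in>space ?P. x u \<in> E}"
  let ?f = "\<lambda>(u::'i) (y::'a). 1 - t * indicator E y :: real"
  have C: "?C u \<in> sets ?P" if "u \<in> V" for u
    using D E that by measurable
  have fint: "integrable \<mu> (?f u)" for u
    using E by (intro Bochner_Integration.integrable_diff) (auto simp: M.emeasure_finite less_top[symmetric])
  have fI: "integral\<^sup>L \<mu> (?f u) = 1 - t * measure \<mu> E" for u
    using E by (subst Bochner_Integration.integral_diff) (auto simp: M.emeasure_finite less_top[symmetric] M.prob_space)
  have pw: "indicator D x \<le> t * (\<Sum>u\<in>V. indicator (?C u) x) + (\<Prod>u\<in>V. ?f u (x u))"
    if x: "x \<in> space ?P" for x
  proof (cases "x \<in> D")
    case False
    have "0 \<le> (\<Prod>u\<in>V. ?f u (x u))" using t by (intro prod_nonneg) (auto simp: indicator_def)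
    moreover have "0 \<le> t * (\<Sum>u\<in>V. indicator (?C u) x)" using t by (intro mult_nonneg_nonneg sum_nonneg) auto
    ultimately show ?thesis using False by simp
  next
    case True
    let ?K = "{u\<in>V. x u \<in> E}"
    have s: "(\<Sum>u\<in>V. indicator (?C u) x) = real (card ?K)"
    proof -
      have "(\<Sum>u\<in>V. indicator (?C u) x) = (\<Sum>u\<in>V. if x u \<in> E then 1 else (0::real))"
        using True x by (intro sum.cong) (auto simp: indicator_def)
      also have "\<dots> = real (card ?K)" using V by (simp add: sum.If_cases Int_def)
      finally show ?thesis .
    qed
    have p: "(\<Prod>u\<in>V. ?f u (x u)) = (1 - t) ^ card ?K"
    proof -
      have "(\<Prod>u\<in>V. ?f u (x u)) = (\<Prod>u\<in>V. if x u \<in> E then 1 - t else 1)"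
        by (intro prod.cong) (auto simp: indicator_def)
      also have "\<dots> = (1 - t) ^ card ?K" using V by (simp add: prod.If_cases Int_def)
      finally show ?thesis .
    qed
    show ?thesis using True one_le_tk[OF t, of "card ?K"] by (simp add: s p)
  qed
  have int1: "integrable ?P (\<lambda>x. t * (\<Sum>u\<in>V. indicator (?C u) x :: real))"
    using C by (intro integrable_mult_right integrable_sum integrable_real_indicator)
      (auto simp: PP.P.emeasure_finite less_top[symmetric])
  have int2: "integrable ?P (\<lambda>x. \<Prod>u\<in>V. ?f u (x u))"
    by (rule PP.product_integrable_prod[OF V fint])
  have "measure ?P D = (\<integral>x. indicator D x \<partial>?P)"
    using D by simp
  also have "\<dots> \<le> (\<integral>x. t * (\<Sum>u\<in>V. indicator (?C u) x) + (\<Prod>u\<in>V. ?f u (x u)) \<partial>?P)"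
    using D pw by (intro integral_mono Bochner_Integration.integrable_add int1 int2)
       (auto simp: PP.P.emeasure_finite less_top[symmetric])
  also have "\<dots> = t * (\<Sum>u\<in>V. measure ?P (?C u)) + (1 - t * measure \<mu> E) ^ card V"
  proof -
    have i1: "(\<integral>x. t * (\<Sum>u\<in>V. indicator (?C u) x) \<partial>?P) = t * (\<Sum>u\<in>V. measure ?P (?C u))"
    proof -
      have "(\<integral>x. (\<Sum>u\<in>V. indicator (?C u) x :: real) \<partial>?P) = (\<Sum>u\<in>V. \<integral>x. indicator (?C u) x \<partial>?P)"
        using C by (intro Bochner_Integration.integral_sum integrable_real_indicator) (auto simp: PP.P.emeasure_finite less_top[symmetric])
      also have "\<dots> = (\<Sum>u\<in>V. measure ?P (?C u))"
        using C by (intro sum.cong refl) (simp add: sets.Int_space_eq2)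
      finally have h: "(\<integral>x. (\<Sum>u\<in>V. indicator (?C u) x :: real) \<partial>?P) = (\<Sum>u\<in>V. measure ?P (?C u))" .
      show ?thesis unfolding integral_mult_right_zero h ..
    qed
    show ?thesis
      unfolding Bochner_Integration.integral_add[OF int1 int2] i1 PP.product_integral_prod[OF V fint] fI
      by simp
  qed
  also have "\<dots> \<le> t * real (card V) * a + (1 - t * measure \<mu> E) ^ card V"
  proof -
    have "(\<Sum>u\<in>V. measure ?P (?C u)) \<le> (\<Sum>u\<in>V. a)" using a by (intro sum_mono) auto
    then show ?thesis using t by (simp add: mult_left_mono mult.assoc)
  qed
  finally show ?thesis .
qed
definition Bset :: "(real \<times> real) set \<Rightarrow> nat \<Rightarrow> real set" where
  "Bset S n = {t * real n * a + (1 - t * b) ^ n | t a b. 0 \<le> t \<and> t \<le> 1 \<and> (a, b) \<in> S}"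

lemma Bset_nonneg:
  assumes S: "\<And>a b. (a, b) \<in> S \<Longrightarrow> 0 \<le> a \<and> 0 \<le> b \<and> b \<le> 1" and y: "y \<in> Bset S n"
  shows "0 \<le> y"
proof -
  from y obtain t a b where y: "y = t * real n * a + (1 - t * b) ^ n" and t: "0 \<le> t" "t \<le> 1" and ab: "(a, b) \<in> S"
    unfolding Bset_def by blast
  have "t * b \<le> 1" using S[OF ab] t mult_le_one by blast
  then have "0 \<le> (1 - t * b) ^ n" by simp
  moreover have "0 \<le> t * real n * a" using S[OF ab] t by simp
  ultimately show ?thesis using y by simp
qed

lemma pow_exp_bound:
  fixes x :: real assumes "0 \<le> x" "x \<le> real n"
  shows "(1 - x / real n) ^ n \<le> exp (- x)"
proof (cases "n = 0")
  case True then show ?thesis using assms by simp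
next
  case False
  have "0 \<le> 1 - x / real n" using assms False by (simp add: field_simps)
  moreover have "1 - x / real n \<le> exp (- x / real n)"
    using exp_ge_add_one_self[of "- x / real n"] by simp
  ultimately have "(1 - x / real n) ^ n \<le> exp (- x / real n) ^ n" by (intro power_mono)
  also have "\<dots> = exp (- x)" using False by (simp add: exp_of_nat_mult[symmetric])
  finally show ?thesis .
qed

lemma Bset_tendsto:
  assumes S: "\<And>a b. (a, b) \<in> S \<Longrightarrow> 0 \<le> a \<and> 0 \<le> b \<and> b \<le> 1"
    and ne: "S \<noteq> {}"
    and low: "\<And>\<epsilon>. 0 < \<epsilon> \<Longrightarrow> \<epsilon> \<le> 1/2 \<Longrightarrow> \<exists>(a, b)\<in>S. a \<le> 2 * \<epsilon> * b \<and> 0 < b"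
  shows "(\<lambda>n. 1 - Inf (Bset S n)) \<longlonglongrightarrow> 1"
proof (rule LIMSEQ_I)
  fix r :: real assume r: "0 < r"
  define x where "x = 2 / r"
  have x: "0 < x" using r by (simp add: x_def)
  have ex: "exp (- x) < r / 2"
  proof -
    have "1 + x \<le> exp x" by (rule exp_ge_add_one_self)
    then have "exp (- x) \<le> 1 / (1 + x)" using x by (simp add: exp_minus field_simps)
    also have "\<dots> < 1 / x" using x by (simp add: field_simps)
    also have "\<dots> = r / 2" by (simp add: x_def)
    finally show ?thesis .
  qed
  define \<epsilon> where "\<epsilon> = min (1/2) (r / (8 * x))"
  have e1: "0 < \<epsilon>" using r x by (simp add: \<epsilon>_def)
  have e2: "\<epsilon> \<le> 1/2" by (simp add: \<epsilon>_def)
  have e3': "\<epsilon> \<le> r / (8 * x)" by (simp add: \<epsilon>_def)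
  have "2 * \<epsilon> * x \<le> 2 * (r / (8 * x)) * x" using e3' x by (intro mult_right_mono) auto
  also have "\<dots> = r / 4" using x by simp
  finally have e3: "2 * \<epsilon> * x \<le> r / 4" .
  note e = e1 e2 e3
  obtain a b where ab: "(a, b) \<in> S" "a \<le> 2 * \<epsilon> * b" "0 < b" using low[OF e(1,2)] by blast
  define N where "N = nat \<lceil>x / b\<rceil> + 1"
  show "\<exists>no. \<forall>n\<ge>no. norm (1 - Inf (Bset S n) - 1) < r"
  proof (intro exI allI impI)
    fix n assume n: "N \<le> n"
    have nx: "x / b \<le> real n" using n unfolding N_def by linarith
    have npos: "0 < real n" using n unfolding N_def by simp
    define t where "t = x / (real n * b)"
    have t: "0 \<le> t" "t \<le> 1" using nx npos ab(3) x by (auto simp: t_def field_simps)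
    have bdd: "bdd_below (Bset S n)" using Bset_nonneg[OF S] by (auto simp: bdd_below_def)
    have mem: "t * real n * a + (1 - t * b) ^ n \<in> Bset S n" using t ab(1) unfolding Bset_def by blast
    have tb: "t * b = x / real n" using npos ab(3) by (simp add: t_def field_simps)
    have term1: "t * real n * a \<le> r / 4"
    proof -
      have "t * real n * a = x * a / b" using npos ab(3) by (simp add: t_def field_simps)
      also have "\<dots> \<le> x * (2 * \<epsilon> * b) / b" using ab(2,3) x by (intro divide_right_mono mult_left_mono) auto
      also have "\<dots> = 2 * \<epsilon> * x" using ab(3) by simp
      finally show ?thesis using e(3) by simp
    qed
    have b1: "b \<le> 1" using S[OF ab(1)] by simp
    have "x * b \<le> x" using b1 x by (simp add: mult_left_le)
    then have "x \<le> x / b" using ab(3) by (simp add: le_divide_eq)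
    then have xn: "x \<le> real n" using nx by linarith
    have term2: "(1 - t * b) ^ n \<le> exp (- x)" unfolding tb by (rule pow_exp_bound) (use x xn in auto)
    have "Inf (Bset S n) \<le> t * real n * a + (1 - t * b) ^ n" by (rule cInf_lower[OF mem bdd])
    moreover have "0 \<le> Inf (Bset S n)"
      using Bset_nonneg[OF S] mem by (intro cInf_greatest) auto
    ultimately show "norm (1 - Inf (Bset S n) - 1) < r" using term1 term2 ex by simp
  qed
qed


locale jsetup =
  fixes \<mu>0 \<mu>1 :: "'a measure"
  assumes p0: "prob_space \<mu>0" and p1: "prob_space \<mu>1" and s10: "sets \<mu>1 = sets \<mu>0"
begin

abbreviation Pm :: "bool \<Rightarrow> nat set \<Rightarrow> (nat \<Rightarrow> 'a) measure" where
  "Pm s V \<equiv> PiM V (\<lambda>v. if s then \<mu>1 else \<mu>0)"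

abbreviation R :: "nat set \<Rightarrow> (bool \<times> (nat \<Rightarrow> 'a)) measure" where
  "R V \<equiv> count_space UNIV \<Otimes>\<^sub>M (\<Pi>\<^sub>M v\<in>V. \<mu>0)"

lemma sets_Pm: "sets (Pm s V) = sets (PiM V (\<lambda>_. \<mu>0))"
  by (rule sets_PiM_cong) (auto simp: s10)

lemma space_Pm: "space (Pm s V) = space (PiM V (\<lambda>_. \<mu>0))"
  using sets_Pm sets_eq_imp_space_eq by blast

lemma prob_Pm: "prob_space (Pm s V)"
  by (rule prob_space_PiM) (auto simp: p0 p1)

lemma K_meas: "(\<lambda>s. distr (Pm s V) (R V) (\<lambda>w. (s, w))) \<in> measurable (measure_pmf (pmf_of_set UNIV)) (subprob_algebra (R V))"
proof -
  have "(\<lambda>s. distr (Pm s V) (R V) (\<lambda>w. (s, w))) \<in> measurable (count_space UNIV) (subprob_algebra (R V))"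
  proof (subst measurable_count_space_eq1, safe)
    fix s :: bool
    have m: "(\<lambda>w. (s, w)) \<in> measurable (Pm s V) (R V)"
      by (rule measurable_Pair[OF measurable_const measurable_ident_sets[OF sets_Pm]]) simp
    interpret P: prob_space "Pm s V" by (rule prob_Pm)
    show "distr (Pm s V) (R V) (\<lambda>w. (s, w)) \<in> space (subprob_algebra (R V))"
      unfolding space_subprob_algebra
      using P.prob_space_distr[OF m] prob_space_imp_subprob_space by auto
  qed
  then show ?thesis by (subst measurable_cong_sets[OF sets_measure_pmf_count_space refl])
qed

lemma sets_joint: "sets (joint \<mu>0 \<mu>1 V) = sets (R V)"
  unfolding joint_def by (rule sets_bind) auto

lemma space_joint: "space (joint \<mu>0 \<mu>1 V) = UNIV \<times> space (PiM V (\<lambda>_. \<mu>0))"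
  using sets_eq_imp_space_eq[OF sets_joint] by (simp add: space_pair_measure)

lemma prob_joint: "prob_space (joint \<mu>0 \<mu>1 V)"
  unfolding joint_def
proof (rule prob_space.prob_space_bind[where S="R V"])
  show "AE x in measure_pmf (pmf_of_set UNIV). prob_space (distr (Pm x V) (R V) (Pair x))"
  proof (rule AE_I2)
    fix s :: bool
    have m: "(\<lambda>w. (s, w)) \<in> measurable (Pm s V) (R V)"
      by (rule measurable_Pair[OF measurable_const measurable_ident_sets[OF sets_Pm]]) simp
    interpret P: prob_space "Pm s V" by (rule prob_Pm)
    show "prob_space (distr (Pm s V) (R V) (Pair s))" using P.prob_space_distr[OF m] by simp
  qed
  show "(\<lambda>s. distr (Pm s V) (R V) (Pair s)) \<in> measurable (measure_pmf (pmf_of_set UNIV)) (subprob_algebra (R V))"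
    using K_meas by simp
qed (simp add: measure_pmf.prob_space_axioms)

lemma emeasure_joint_slice:
  assumes D: "D \<in> sets (PiM V (\<lambda>_. \<mu>0))"
  shows "emeasure (joint \<mu>0 \<mu>1 V) {\<omega> \<in> space (joint \<mu>0 \<mu>1 V). state \<omega> = s \<and> snd \<omega> \<in> D}
         = emeasure (Pm s V) D / 2"
proof -
  let ?X = "{\<omega> \<in> space (joint \<mu>0 \<mu>1 V). state \<omega> = s \<and> snd \<omega> \<in> D}"
  have X: "?X = {s} \<times> D"
    using sets.sets_into_space[OF D] by (auto simp: space_joint state_def)
  have Xs: "?X \<in> sets (R V)" unfolding X using D by auto
  have "emeasure (joint \<mu>0 \<mu>1 V) ?X = \<integral>\<^sup>+t. emeasure (distr (Pm t V) (R V) (\<lambda>w. (t, w))) ?X \<partial>measure_pmf (pmf_of_set UNIV)"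
    using emeasure_bind[OF _ K_meas Xs] by (simp add: joint_def)
  also have "\<dots> = (\<Sum>t\<in>UNIV. emeasure (distr (Pm t V) (R V) (\<lambda>w. (t, w))) ?X) / 2"
    by (subst nn_integral_pmf_of_set) auto
  also have "(\<Sum>t\<in>UNIV. emeasure (distr (Pm t V) (R V) (\<lambda>w. (t, w))) ?X) = emeasure (Pm s V) D"
  proof -
    have e: "emeasure (distr (Pm t V) (R V) (\<lambda>w. (t, w))) ?X = (if t = s then emeasure (Pm s V) D else 0)" for t
    proof -
      have m: "(\<lambda>w. (t, w)) \<in> measurable (Pm t V) (R V)"
        by (rule measurable_Pair[OF measurable_const measurable_ident_sets[OF sets_Pm]]) simp
      have "(\<lambda>w. (t, w)) -` ?X \<inter> space (Pm t V) = (if t = s then D else {})"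
        using sets.sets_into_space[OF D] by (auto simp: X space_Pm)
      then show ?thesis by (simp add: emeasure_distr[OF m Xs])
    qed
    show ?thesis by (simp only: e) (simp add: sum.delta)
  qed
  finally show ?thesis .
qed

abbreviation J where "J V \<equiv> joint \<mu>0 \<mu>1 V"

lemma state_meas: "{\<omega> \<in> space (J V). state \<omega>} \<in> sets (J V)"
proof -
  have "{\<omega> \<in> space (J V). state \<omega>} = {True} \<times> space (PiM V (\<lambda>_. \<mu>0))"
    by (auto simp: space_joint state_def)
  then show ?thesis by (simp add: sets_joint)
qed

lemma ce_key:
  assumes sub: "subalgebra (J V) F" and G: "G \<in> sets F"
  shows "integrable (J V) (post_belief \<mu>0 \<mu>1 V F)"
    and "(LINT \<omega>:G|J V. post_belief \<mu>0 \<mu>1 V F \<omega>) = measure (J V) {\<omega>\<in>G. state \<omega>}"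
proof -
  interpret P: prob_space "J V" by (rule prob_joint)
  interpret S: finite_measure_subalgebra "J V" F
    by unfold_locales (rule sub)
  let ?S = "{\<omega> \<in> space (J V). state \<omega>}"
  have int0: "integrable (J V) (indicator ?S :: _ \<Rightarrow> real)"
    by (rule integrable_real_indicator[OF state_meas]) (simp add: P.emeasure_finite less_top[symmetric])
  have int: "integrable (J V) (indicator {\<omega>. state \<omega>} :: _ \<Rightarrow> real)"
    using int0 by (rule Bochner_Integration.integrable_cong[THEN iffD1, rotated -1]) (auto simp: indicator_def)
  show "integrable (J V) (post_belief \<mu>0 \<mu>1 V F)"
    unfolding post_belief_def by (rule S.real_cond_exp_int(1)[OF int])
  have GJ: "G \<in> sets (J V)" using G sub by (auto simp: subalgebra_def)
  have "(LINT \<omega>:G|J V. post_belief \<mu>0 \<mu>1 V F \<omega>) = (LINT \<omega>:G|J V. indicator {\<omega>. state \<omega>} \<omega>)"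
    unfolding post_belief_def by (rule S.real_cond_exp_intA[OF int G, symmetric])
  also have "\<dots> = measure (J V) {\<omega>\<in>G. state \<omega>}"
  proof -
    have e: "(\<lambda>x. indicator G x *\<^sub>R indicator {\<omega>. state \<omega>} x) = (indicator {\<omega>\<in>G. state \<omega>} :: _ \<Rightarrow> real)"
      by (auto simp: indicator_def)
    have "{\<omega>\<in>G. state \<omega>} \<inter> space (J V) = {\<omega>\<in>G. state \<omega>}" using sets.sets_into_space[OF GJ] by auto
    then show ?thesis unfolding set_lebesgue_integral_def e by simp
  qed
  finally show "(LINT \<omega>:G|J V. post_belief \<mu>0 \<mu>1 V F \<omega>) = measure (J V) {\<omega>\<in>G. state \<omega>}" .
qed

lemma ce_ge:
  assumes sub: "subalgebra (J V) F" and G: "G \<in> sets F" and c: "\<And>\<omega>. \<omega> \<in> G \<Longrightarrow> c \<le> post_belief \<mu>0 \<mu>1 V F \<omega>"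
  shows "c * measure (J V) G \<le> measure (J V) {\<omega>\<in>G. state \<omega>}"
proof -
  interpret P: prob_space "J V" by (rule prob_joint)
  have GJ: "G \<in> sets (J V)" using G sub by (auto simp: subalgebra_def)
  have "c * measure (J V) G = (LINT \<omega>:G|J V. c)"
    using set_integral_const[OF GJ, of c] by (simp add: P.emeasure_finite)
  also have "\<dots> \<le> (LINT \<omega>:G|J V. post_belief \<mu>0 \<mu>1 V F \<omega>)"
  proof (rule set_integral_mono[OF _ _ c])
    show "set_integrable (J V) G (\<lambda>_. c)" unfolding set_integrable_def
      by (rule integrable_mult_indicator[OF GJ]) simp
    show "set_integrable (J V) G (post_belief \<mu>0 \<mu>1 V F)" unfolding set_integrable_def
      by (rule integrable_mult_indicator[OF GJ ce_key(1)[OF sub G]])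
  qed
  finally show ?thesis using ce_key(2)[OF sub G] by simp
qed

lemma ce_le:
  assumes sub: "subalgebra (J V) F" and G: "G \<in> sets F" and c: "\<And>\<omega>. \<omega> \<in> G \<Longrightarrow> post_belief \<mu>0 \<mu>1 V F \<omega> \<le> c"
  shows "measure (J V) {\<omega>\<in>G. state \<omega>} \<le> c * measure (J V) G"
proof -
  interpret P: prob_space "J V" by (rule prob_joint)
  have GJ: "G \<in> sets (J V)" using G sub by (auto simp: subalgebra_def)
  have "c * measure (J V) G = (LINT \<omega>:G|J V. c)"
    using set_integral_const[OF GJ, of c] by (simp add: P.emeasure_finite)
  moreover have "(LINT \<omega>:G|J V. post_belief \<mu>0 \<mu>1 V F \<omega>) \<le> (LINT \<omega>:G|J V. c)"
  proof (rule set_integral_mono[OF _ _ c])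
    show "set_integrable (J V) G (\<lambda>_. c)" unfolding set_integrable_def
      by (rule integrable_mult_indicator[OF GJ]) simp
    show "set_integrable (J V) G (post_belief \<mu>0 \<mu>1 V F)" unfolding set_integrable_def
      by (rule integrable_mult_indicator[OF GJ ce_key(1)[OF sub G]])
  qed
  ultimately show ?thesis using ce_key(2)[OF sub G] by simp
qed

lemma sig_signal_in:
  assumes "u \<in> V" "E \<in> sets \<mu>0"
  shows "{\<omega>\<in>space (J V). snd \<omega> u \<in> E} \<in> sets (sig_signal \<mu>0 \<mu>1 V u)"
proof -
  have "{\<omega>\<in>space (J V). snd \<omega> u \<in> E} = signal u -` E \<inter> space (J V)"
    by (auto simp: signal_def)
  then show ?thesis unfolding sig_signal_def using in_vimage_algebra[OF assms(2)] by simp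
qed

lemma signal_space: "u \<in> V \<Longrightarrow> signal u \<in> space (J V) \<rightarrow> space \<mu>0"
  by (auto simp: space_joint signal_def space_PiM)

lemma sig_signal_form:
  assumes "u \<in> V" "G \<in> sets (sig_signal \<mu>0 \<mu>1 V u)"
  shows "\<exists>E\<in>sets \<mu>0. G = {\<omega>\<in>space (J V). snd \<omega> u \<in> E}"
proof -
  from assms(2) obtain E where "E \<in> sets \<mu>0" "G = signal u -` E \<inter> space (J V)"
    unfolding sig_signal_def sets_vimage_algebra2[OF signal_space[OF assms(1)]] by auto
  then show ?thesis by (auto simp: signal_def)
qed

lemma sig_all_form:
  assumes "G \<in> sets (sig_all_signals \<mu>0 \<mu>1 V)"
  shows "\<exists>D\<in>sets (PiM V (\<lambda>_. \<mu>0)). G = {\<omega>\<in>space (J V). snd \<omega> \<in> D}"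
proof -
  let ?W = "vimage_algebra (space (J V)) snd (PiM V (\<lambda>_. \<mu>0))"
  have sp: "snd \<in> space (J V) \<rightarrow> space (PiM V (\<lambda>_. \<mu>0))" by (auto simp: space_joint)
  have gen: "(\<Union>v\<in>V. sets (sig_signal \<mu>0 \<mu>1 V v)) \<subseteq> sets ?W"
  proof safe
    fix v G assume v: "v \<in> V" and G: "G \<in> sets (sig_signal \<mu>0 \<mu>1 V v)"
    from sig_signal_form[OF v G] obtain E where E: "E \<in> sets \<mu>0" "G = {\<omega>\<in>space (J V). snd \<omega> v \<in> E}" by blast
    have GE: "G = snd -` {x\<in>space (PiM V (\<lambda>_. \<mu>0)). x v \<in> E} \<inter> space (J V)"
      using E(2) by (auto simp: space_joint)
    have DE: "{x\<in>space (PiM V (\<lambda>_. \<mu>0)). x v \<in> E} \<in> sets (PiM V (\<lambda>_. \<mu>0))"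
      using E(1) v by measurable
    show "G \<in> sets ?W" using in_vimage_algebra[OF DE, of snd "space (J V)"] GE by simp
  qed
  have "sets (sig_all_signals \<mu>0 \<mu>1 V) \<subseteq> sets ?W"
  proof -
    have sub: "(\<Union>v\<in>V. sets (sig_signal \<mu>0 \<mu>1 V v)) \<subseteq> Pow (space (J V))"
    proof -
      have "sets (sig_signal \<mu>0 \<mu>1 V v) \<subseteq> Pow (space (J V))" for v
        using sets.space_closed[of "sig_signal \<mu>0 \<mu>1 V v"] unfolding sig_signal_def space_vimage_algebra .
      then show ?thesis by blast
    qed
    show ?thesis unfolding sig_all_signals_def sets_measure_of[OF sub]
      using sets.sigma_sets_subset[OF gen] by simp
  qed
  with assms have "G \<in> sets ?W" by blast
  then obtain D where "D \<in> sets (PiM V (\<lambda>_. \<mu>0))" "G = snd -` D \<inter> space (J V)"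
    unfolding sets_vimage_algebra2[OF sp] by auto
  then show ?thesis by auto
qed

lemma measure_joint_slice:
  assumes D: "D \<in> sets (PiM V (\<lambda>_. \<mu>0))"
  shows "measure (J V) {\<omega> \<in> space (J V). state \<omega> = s \<and> snd \<omega> \<in> D} = measure (Pm s V) D / 2"
proof -
  interpret P: prob_space "Pm s V" by (rule prob_Pm)
  have "emeasure (J V) {\<omega> \<in> space (J V). state \<omega> = s \<and> snd \<omega> \<in> D} = ennreal (measure (Pm s V) D / 2)"
    using emeasure_joint_slice[OF D, of s] by (simp only: P.emeasure_eq_measure ennreal_divide_numeral[OF measure_nonneg])
  then show ?thesis by (simp add: measure_def)
qed

lemma snd_set_meas:
  assumes D: "D \<in> sets (PiM V (\<lambda>_. \<mu>0))"
  shows "{\<omega> \<in> space (J V). P (state \<omega>) \<and> snd \<omega> \<in> D} \<in> sets (J V)"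
proof -
  have "{\<omega> \<in> space (J V). P (state \<omega>) \<and> snd \<omega> \<in> D} = {s. P s} \<times> D"
    using sets.sets_into_space[OF D] by (auto simp: space_joint state_def)
  then show ?thesis using D by (simp add: sets_joint)
qed

lemma measure_split:
  assumes D: "D \<in> sets (PiM V (\<lambda>_. \<mu>0))" and G: "G = {\<omega>\<in>space (J V). snd \<omega> \<in> D}"
  shows "measure (J V) {\<omega>\<in>G. state \<omega>} = measure (Pm True V) D / 2"
    and "measure (J V) {\<omega>\<in>G. \<not> state \<omega>} = measure (Pm False V) D / 2"
    and "measure (J V) G = measure (J V) {\<omega>\<in>G. state \<omega>} + measure (J V) {\<omega>\<in>G. \<not> state \<omega>}"
proof -
  interpret P: prob_space "J V" by (rule prob_joint)
  have e1: "{\<omega>\<in>G. state \<omega>} = {\<omega> \<in> space (J V). state \<omega> = True \<and> snd \<omega> \<in> D}" using G by auto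
  have e2: "{\<omega>\<in>G. \<not> state \<omega>} = {\<omega> \<in> space (J V). state \<omega> = False \<and> snd \<omega> \<in> D}" using G by auto
  show "measure (J V) {\<omega>\<in>G. state \<omega>} = measure (Pm True V) D / 2"
    unfolding e1 by (rule measure_joint_slice[OF D])
  show "measure (J V) {\<omega>\<in>G. \<not> state \<omega>} = measure (Pm False V) D / 2"
    unfolding e2 by (rule measure_joint_slice[OF D])
  have m1: "{\<omega>\<in>G. state \<omega>} \<in> sets (J V)" unfolding e1 using snd_set_meas[OF D, of "\<lambda>s. s = True"] by simp
  have m2: "{\<omega>\<in>G. \<not> state \<omega>} \<in> sets (J V)" unfolding e2 using snd_set_meas[OF D, of "\<lambda>s. s = False"] by simp
  have "G = {\<omega>\<in>G. state \<omega>} \<union> {\<omega>\<in>G. \<not> state \<omega>}" by auto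
  then show "measure (J V) G = measure (J V) {\<omega>\<in>G. state \<omega>} + measure (J V) {\<omega>\<in>G. \<not> state \<omega>}"
    using P.finite_measure_Union[OF m1 m2] by auto
qed

lemma subalg_info:
  assumes "info_algebra \<mu>0 \<mu>1 V u F"
  shows "subalgebra (J V) F"
proof -
  have "sets (sig_all_signals \<mu>0 \<mu>1 V) \<subseteq> sets (J V)"
  proof
    fix G assume "G \<in> sets (sig_all_signals \<mu>0 \<mu>1 V)"
    then obtain D where D: "D \<in> sets (PiM V (\<lambda>_. \<mu>0))" "G = {\<omega>\<in>space (J V). snd \<omega> \<in> D}"
      using sig_all_form by blast
    show "G \<in> sets (J V)" using snd_set_meas[OF D(1), of "\<lambda>_. True"] D(2) by simp
  qed
  then show ?thesis using assms unfolding info_algebra_def subalgebra_def by blast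
qed

lemma info_sets_form:
  assumes "info_algebra \<mu>0 \<mu>1 V u F" "G \<in> sets F"
  shows "\<exists>D\<in>sets (PiM V (\<lambda>_. \<mu>0)). G = {\<omega>\<in>space (J V). snd \<omega> \<in> D}"
  using assms sig_all_form unfolding info_algebra_def by blast

lemma opt_ne0: "opt_actions x \<noteq> {0} \<longleftrightarrow> 1/2 \<le> x"
  by (auto simp: opt_actions_def)

lemma D0_meas:
  assumes Lm: "L \<in> measurable (J V) (count_space UNIV)"
  shows "{x\<in>space (PiM V (\<lambda>_. \<mu>0)). L (False, x) \<noteq> {0}} \<in> sets (PiM V (\<lambda>_. \<mu>0))"
proof -
  have Lm': "L \<in> measurable (R V) (count_space UNIV)"
    using Lm by (subst (asm) measurable_cong_sets[OF sets_joint refl])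
  have pm: "(\<lambda>x. (False, x)) \<in> measurable (PiM V (\<lambda>_. \<mu>0)) (R V)"
    by measurable
  have fm: "(\<lambda>x. L (False, x)) \<in> measurable (PiM V (\<lambda>_. \<mu>0)) (count_space UNIV)"
    using measurable_compose[OF pm Lm'] by (simp add: comp_def)
  have "(\<lambda>x. L (False, x)) -` (UNIV - {{0}}) \<inter> space (PiM V (\<lambda>_. \<mu>0)) \<in> sets (PiM V (\<lambda>_. \<mu>0))"
    by (rule measurable_sets[OF fm]) simp
  moreover have "(\<lambda>x. L (False, x)) -` (UNIV - {{0}}) \<inter> space (PiM V (\<lambda>_. \<mu>0)) = {x\<in>space (PiM V (\<lambda>_. \<mu>0)). L (False, x) \<noteq> {0}}"
    by auto
  ultimately show ?thesis by simp
qed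

lemma per_u:
  assumes u: "u \<in> V" and info: "info_algebra \<mu>0 \<mu>1 V u F"
    and Lm: "L \<in> measurable (J V) (count_space UNIV)"
    and ae: "AE \<omega> in J V. L \<omega> = opt_actions (post_belief \<mu>0 \<mu>1 V F \<omega>)"
    and E: "E \<in> sets \<mu>0"
  shows "measure (Pm False V) ({x\<in>space (PiM V (\<lambda>_. \<mu>0)). L (False, x) \<noteq> {0}} \<inter> {x\<in>space (PiM V (\<lambda>_. \<mu>0)). x u \<in> E}) \<le> measure \<mu>1 E"
proof -
  interpret P: prob_space "J V" by (rule prob_joint)
  let ?P0 = "PiM V (\<lambda>_. \<mu>0)"
  let ?X = "post_belief \<mu>0 \<mu>1 V F"
  let ?D0 = "{x\<in>space ?P0. L (False, x) \<noteq> {0}}"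
  let ?Cu = "{x\<in>space ?P0. x u \<in> E}"
  have sub: "subalgebra (J V) F" by (rule subalg_info[OF info])
  have spF: "space F = space (J V)" using info unfolding info_algebra_def by blast
  have Xm: "?X \<in> borel_measurable F" unfolding post_belief_def by (rule borel_measurable_cond_exp)
  let ?G = "{\<omega>\<in>space (J V). 1/2 \<le> ?X \<omega> \<and> snd \<omega> u \<in> E}"
  have A: "{\<omega>\<in>space F. 1/2 \<le> ?X \<omega>} \<in> sets F" using Xm by measurable
  have C: "{\<omega>\<in>space (J V). snd \<omega> u \<in> E} \<in> sets F"
    using sig_signal_in[OF u E] info unfolding info_algebra_def by blast
  have GF: "?G \<in> sets F"
  proof -
    have "?G = {\<omega>\<in>space F. 1/2 \<le> ?X \<omega>} \<inter> {\<omega>\<in>space (J V). snd \<omega> u \<in> E}" using spF by auto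
    then show ?thesis using A C by auto
  qed
  have ge: "1/2 * measure (J V) ?G \<le> measure (J V) {\<omega>\<in>?G. state \<omega>}"
    by (rule ce_ge[OF sub GF]) auto
  obtain D where D: "D \<in> sets ?P0" "?G = {\<omega>\<in>space (J V). snd \<omega> \<in> D}"
    using info_sets_form[OF info GF] by blast
  note spl = measure_split[OF D]
  have mNS: "measure (J V) {\<omega>\<in>?G. \<not> state \<omega>} \<le> measure (J V) {\<omega>\<in>?G. state \<omega>}"
    using ge spl(3) by simp
  have CuS: "?Cu \<in> sets ?P0" using E u by measurable
  have mS: "measure (J V) {\<omega>\<in>?G. state \<omega>} \<le> measure \<mu>1 E / 2"
  proof -
    have "measure (J V) {\<omega>\<in>?G. state \<omega>} \<le> measure (J V) {\<omega>\<in>space (J V). state \<omega> = True \<and> snd \<omega> \<in> ?Cu}"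
      by (intro P.finite_measure_mono snd_set_meas[OF CuS]) (auto simp: space_joint)
    also have "\<dots> = measure (Pm True V) ?Cu / 2" by (rule measure_joint_slice[OF CuS])
    also have "measure (Pm True V) ?Cu = measure \<mu>1 E"
    proof -
      interpret PP: product_prob_space "\<lambda>_. \<mu>1" V
        by (simp add: product_prob_space_def product_prob_space_axioms_def product_sigma_finite_def p1 prob_space_imp_sigma_finite)
      have "?Cu = {x\<in>space (PiM V (\<lambda>_. \<mu>1)). x u \<in> E}" using space_Pm[where s=True and V=V] by simp
      then show ?thesis using PP.emeasure_PiM_Collect_single[OF u, of E] E s10 by (simp add: measure_def)
    qed
    finally show ?thesis by simp
  qed
  have D0S: "?D0 \<in> sets ?P0" by (rule D0_meas[OF Lm])
  have mN: "measure (J V) {\<omega>\<in>?G. \<not> state \<omega>} = measure (Pm False V) (?D0 \<inter> ?Cu) / 2"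
  proof -
    have "measure (J V) {\<omega>\<in>?G. \<not> state \<omega>} = measure (J V) {\<omega>\<in>space (J V). state \<omega> = False \<and> snd \<omega> \<in> ?D0 \<inter> ?Cu}"
    proof (rule measure_eq_AE)
      show "AE \<omega> in J V. (\<omega> \<in> {\<omega>\<in>?G. \<not> state \<omega>}) = (\<omega> \<in> {\<omega>\<in>space (J V). state \<omega> = False \<and> snd \<omega> \<in> ?D0 \<inter> ?Cu})"
        using ae
      proof (rule AE_mp, intro AE_I2 impI)
        fix \<omega> assume w: "\<omega> \<in> space (J V)" and L: "L \<omega> = opt_actions (?X \<omega>)"
        obtain s x where sx: "\<omega> = (s, x)" by (cases \<omega>)
        have xs: "x \<in> space ?P0" using w sx by (auto simp: space_joint)
        show "(\<omega> \<in> {\<omega>\<in>?G. \<not> state \<omega>}) = (\<omega> \<in> {\<omega>\<in>space (J V). state \<omega> = False \<and> snd \<omega> \<in> ?D0 \<inter> ?Cu})"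
        proof -
          have Lx: "L (s, x) \<noteq> {0} \<longleftrightarrow> 1/2 \<le> ?X (s, x)" using L opt_ne0[of "?X \<omega>"] sx by simp
          show ?thesis unfolding sx state_def using w xs Lx
            by (cases s) (simp_all add: sx)
        qed
      qed
      have eq: "{\<omega>\<in>?G. \<not> state \<omega>} = {\<omega>\<in>space (J V). \<not> state \<omega> \<and> snd \<omega> \<in> D}"
        unfolding D(2) by blast
      show "{\<omega>\<in>?G. \<not> state \<omega>} \<in> sets (J V)" unfolding eq by (rule snd_set_meas[OF D(1)])
      show "{\<omega>\<in>space (J V). state \<omega> = False \<and> snd \<omega> \<in> ?D0 \<inter> ?Cu} \<in> sets (J V)"
        using D0S CuS by (intro snd_set_meas) auto
    qed
    also have "\<dots> = measure (Pm False V) (?D0 \<inter> ?Cu) / 2"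
      using D0S CuS by (intro measure_joint_slice) auto
    finally show ?thesis .
  qed
  show ?thesis using mN mS mNS by simp
qed

lemma main_bound:
  assumes fin: "finite V" and info: "\<forall>u\<in>V. info_algebra \<mu>0 \<mu>1 V u (F u)"
    and Lm: "L \<in> measurable (J V) (count_space UNIV)"
    and agree: "\<forall>u\<in>V. AE \<omega> in J V. L \<omega> = opt_actions (post_belief \<mu>0 \<mu>1 V (F u) \<omega>)"
    and E: "E \<in> sets \<mu>0" and t: "0 \<le> t" "t \<le> 1"
  shows "1 - (t * real (card V) * measure \<mu>1 E + (1 - t * measure \<mu>0 E) ^ card V)
     \<le> measure (J V) {\<omega> \<in> space (J V). L \<omega> = {0} \<and> \<not> state \<omega>}
        / measure (J V) {\<omega> \<in> space (J V). \<not> state \<omega>}"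
proof -
  let ?P0 = "PiM V (\<lambda>_. \<mu>0)"
  let ?D0 = "{x\<in>space ?P0. L (False, x) \<noteq> {0}}"
  interpret P0: prob_space ?P0 by (rule prob_space_PiM) (rule p0)
  have D0S: "?D0 \<in> sets ?P0" by (rule D0_meas[OF Lm])
  have bd: "measure ?P0 ?D0 \<le> t * real (card V) * measure \<mu>1 E + (1 - t * measure \<mu>0 E) ^ card V"
  proof (rule core_bound[OF p0 fin D0S E t])
    fix u assume u: "u \<in> V"
    show "measure ?P0 (?D0 \<inter> {x \<in> space ?P0. x u \<in> E}) \<le> measure \<mu>1 E"
      using per_u[OF u _ Lm _ E, of "F u"] info agree u by simp
  qed
  have den: "measure (J V) {\<omega> \<in> space (J V). \<not> state \<omega>} = 1/2"
  proof -
    have "{\<omega> \<in> space (J V). \<not> state \<omega>} = {\<omega> \<in> space (J V). state \<omega> = False \<and> snd \<omega> \<in> space ?P0}"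
      by (auto simp: space_joint)
    then show ?thesis using measure_joint_slice[OF sets.top, of V False] P0.prob_space by simp
  qed
  have num: "measure (J V) {\<omega> \<in> space (J V). L \<omega> = {0} \<and> \<not> state \<omega>} = (1 - measure ?P0 ?D0) / 2"
  proof -
    have "{\<omega> \<in> space (J V). L \<omega> = {0} \<and> \<not> state \<omega>} = {\<omega> \<in> space (J V). state \<omega> = False \<and> snd \<omega> \<in> space ?P0 - ?D0}"
    proof (rule set_eqI)
      fix \<omega> :: "bool \<times> (nat \<Rightarrow> 'a)"
      obtain s x where sx: "\<omega> = (s, x)" by (cases \<omega>)
      show "(\<omega> \<in> {\<omega> \<in> space (J V). L \<omega> = {0} \<and> \<not> state \<omega>}) = (\<omega> \<in> {\<omega> \<in> space (J V). state \<omega> = False \<and> snd \<omega> \<in> space ?P0 - ?D0})"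
        unfolding sx by (cases s) (simp_all add: space_joint state_def, blast)
    qed
    moreover have "space ?P0 - ?D0 \<in> sets ?P0" using D0S by auto
    moreover have "measure ?P0 (space ?P0 - ?D0) = 1 - measure ?P0 ?D0"
      using P0.prob_compl[OF D0S] by simp
    ultimately show ?thesis using measure_joint_slice[of "space ?P0 - ?D0" V False] by simp
  qed
  show ?thesis using bd by (simp add: den num)
qed

lemma measure_single:
  assumes u: "u \<in> V" and E: "E \<in> sets \<mu>0"
  shows "measure (Pm s V) {x\<in>space (PiM V (\<lambda>_. \<mu>0)). x u \<in> E} = measure (if s then \<mu>1 else \<mu>0) E"
proof -
  let ?m = "if s then \<mu>1 else \<mu>0"
  have ps: "prob_space ?m" using p0 p1 by simp
  interpret PP: product_prob_space "\<lambda>_. ?m" V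
    by (simp add: product_prob_space_def product_prob_space_axioms_def product_sigma_finite_def ps prob_space_imp_sigma_finite)
  have eq: "{x\<in>space (PiM V (\<lambda>_. \<mu>0)). x u \<in> E} = {x\<in>space (PiM V (\<lambda>_. ?m)). x u \<in> E}"
    using space_Pm[where s=s and V=V] by simp
  have Es: "E \<in> sets ?m" using E s10 by simp
  show ?thesis unfolding eq using PP.emeasure_PiM_Collect_single[OF u Es] by (simp add: measure_def)
qed

lemma info_signal_alg: "info_algebra \<mu>0 \<mu>1 {0} 0 (sig_signal \<mu>0 \<mu>1 {0} 0)"
proof -
  let ?gen = "\<Union>v\<in>{0::nat}. sets (sig_signal \<mu>0 \<mu>1 {0} v)"
  have sub: "?gen \<subseteq> Pow (space (J {0}))"
    using sets.space_closed[of "sig_signal \<mu>0 \<mu>1 {0} 0"] unfolding sig_signal_def space_vimage_algebra by simp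
  have "sets (sig_signal \<mu>0 \<mu>1 {0} 0) \<subseteq> sets (sig_all_signals \<mu>0 \<mu>1 {0})"
    unfolding sig_all_signals_def sets_measure_of[OF sub] by (auto intro: sigma_sets.Basic)
  then show ?thesis unfolding info_algebra_def by (simp add: sig_signal_def)
qed

lemma low_set:
  assumes ac: "absolutely_continuous \<mu>0 \<mu>1" and eps: "0 < \<epsilon>" "\<epsilon> \<le> 1/2"
    and pos: "0 < measure (J {0}) {\<omega> \<in> space (J {0}). priv_belief \<mu>0 \<mu>1 \<omega> < \<epsilon>}"
  shows "\<exists>E\<in>sets \<mu>0. measure \<mu>1 E \<le> 2 * \<epsilon> * measure \<mu>0 E \<and> 0 < measure \<mu>0 E"
proof -
  let ?F = "sig_signal \<mu>0 \<mu>1 {0} 0"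
  let ?B = "post_belief \<mu>0 \<mu>1 {0} ?F"
  let ?G = "{\<omega> \<in> space (J {0}). ?B \<omega> < \<epsilon>}"
  have info: "info_algebra \<mu>0 \<mu>1 {0} 0 ?F" by (rule info_signal_alg)
  have sub: "subalgebra (J {0}) ?F" by (rule subalg_info[OF info])
  have spF: "space ?F = space (J {0})" using info unfolding info_algebra_def by blast
  have Bm: "?B \<in> borel_measurable ?F" unfolding post_belief_def by (rule borel_measurable_cond_exp)
  have GF: "?G \<in> sets ?F"
  proof -
    have "{\<omega> \<in> space ?F. ?B \<omega> < \<epsilon>} \<in> sets ?F" using Bm by measurable
    then show ?thesis using spF by simp
  qed
  have le: "measure (J {0}) {\<omega>\<in>?G. state \<omega>} \<le> \<epsilon> * measure (J {0}) ?G"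
    by (rule ce_le[OF sub GF]) auto
  obtain E where E: "E \<in> sets \<mu>0" "?G = {\<omega>\<in>space (J {0}). snd \<omega> 0 \<in> E}"
    using sig_signal_form[OF _ GF] by blast
  let ?D = "{x\<in>space (PiM {0} (\<lambda>_. \<mu>0)). x 0 \<in> E}"
  have DS: "?D \<in> sets (PiM {0} (\<lambda>_. \<mu>0))" using E(1) by measurable
  have GD: "?G = {\<omega>\<in>space (J {0}). snd \<omega> \<in> ?D}"
  proof -
    have "{\<omega>\<in>space (J {0}). snd \<omega> 0 \<in> E} = {\<omega>\<in>space (J {0}). snd \<omega> \<in> ?D}"
      by (auto simp: space_joint)
    then show ?thesis using E(2) by simp
  qed
  note spl = measure_split[OF DS GD]
  have m1: "measure (Pm True {0}) ?D = measure \<mu>1 E" using measure_single[OF _ E(1), of 0 "{0}" True] by simp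
  have m0: "measure (Pm False {0}) ?D = measure \<mu>0 E" using measure_single[OF _ E(1), of 0 "{0}" False] by simp
  have a: "measure \<mu>1 E \<le> \<epsilon> * (measure \<mu>1 E + measure \<mu>0 E)"
  proof -
    define mS where "mS = measure (J {0}) {\<omega>\<in>?G. state \<omega>}"
    define mN where "mN = measure (J {0}) {\<omega>\<in>?G. \<not> state \<omega>}"
    have h1: "mS \<le> \<epsilon> * (mS + mN)" using le spl(3) unfolding mS_def mN_def by simp
    have h2: "measure \<mu>1 E = 2 * mS" using spl(1) m1 unfolding mS_def by simp
    have h3: "measure \<mu>0 E = 2 * mN" using spl(2) m0 unfolding mN_def by simp
    have "2 * mS \<le> 2 * (\<epsilon> * (mS + mN))" using h1 by simp
    then show ?thesis unfolding h2 h3 by (simp add: algebra_simps)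
  qed
  have "measure \<mu>1 E / 2 \<le> (1 - \<epsilon>) * measure \<mu>1 E"
  proof -
    have "0 \<le> (1/2 - \<epsilon>) * measure \<mu>1 E" using eps by (intro mult_nonneg_nonneg) auto
    then show ?thesis by (simp add: algebra_simps)
  qed
  also have "\<dots> \<le> \<epsilon> * measure \<mu>0 E" using a by (simp add: algebra_simps)
  finally have r1: "measure \<mu>1 E \<le> 2 * \<epsilon> * measure \<mu>0 E" by simp
  have r2: "0 < measure \<mu>0 E"
  proof (rule ccontr)
    assume "\<not> 0 < measure \<mu>0 E"
    then have "measure \<mu>0 E = 0" using measure_nonneg[of \<mu>0 E] by linarith
    then have "E \<in> null_sets \<mu>0"
      using E(1) finite_measure.emeasure_eq_measure[OF prob_space.axioms(1)[OF p0]] by (simp add: null_sets_def)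
    then have "E \<in> null_sets \<mu>1" using ac unfolding absolutely_continuous_def by blast
    then have "measure \<mu>1 E = 0" by (simp add: measure_def null_sets_def)
    with \<open>measure \<mu>0 E = 0\<close> have "measure (J {0}) ?G = 0" using spl m1 m0 by simp
    moreover have "?B = priv_belief \<mu>0 \<mu>1" by (simp add: priv_belief_def)
    ultimately show False using pos by simp
  qed
  show ?thesis using r1 r2 E(1) by blast
qed

end



theorem theorem3:
  fixes \<mu>0 \<mu>1 :: "'a measure"
  assumes "prob_space \<mu>0" and "prob_space \<mu>1"
    and "sets \<mu>1 = sets \<mu>0"
    and "\<mu>0 \<noteq> \<mu>1"
    and "absolutely_continuous \<mu>0 \<mu>1"
    and unbounded_below:
      "\<forall>\<epsilon>>0. measure (joint \<mu>0 \<mu>1 {0})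
                 {\<omega> \<in> space (joint \<mu>0 \<mu>1 {0}). priv_belief \<mu>0 \<mu>1 \<omega> < \<epsilon>} > 0"
  shows "\<exists>q :: nat \<Rightarrow> real. q \<longlonglongrightarrow> 1 \<and>
    (\<forall>(n :: nat) (V :: nat set) (F :: nat \<Rightarrow> (bool \<times> (nat \<Rightarrow> 'a)) measure)
        (L :: bool \<times> (nat \<Rightarrow> 'a) \<Rightarrow> nat set).
      finite V \<and> card V = n \<and>
      (\<forall>u\<in>V. info_algebra \<mu>0 \<mu>1 V u (F u)) \<and>
      (\<forall>u\<in>V. \<forall>w\<in>V. \<exists>g \<in> measurable (F w) (count_space UNIV).
         AE \<omega> in joint \<mu>0 \<mu>1 V.
           opt_actions (post_belief \<mu>0 \<mu>1 V (F u) \<omega>) = g \<omega>) \<and>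
      L \<in> measurable (joint \<mu>0 \<mu>1 V) (count_space UNIV) \<and>
      (\<forall>u\<in>V. AE \<omega> in joint \<mu>0 \<mu>1 V. L \<omega> = opt_actions (post_belief \<mu>0 \<mu>1 V (F u) \<omega>))
      \<longrightarrow>
      measure (joint \<mu>0 \<mu>1 V) {\<omega> \<in> space (joint \<mu>0 \<mu>1 V). L \<omega> = {0} \<and> \<not> state \<omega>}
        / measure (joint \<mu>0 \<mu>1 V) {\<omega> \<in> space (joint \<mu>0 \<mu>1 V). \<not> state \<omega>}
      \<ge> q n)"
  proof -
  interpret jsetup \<mu>0 \<mu>1 using assms(1-3) by (simp add: jsetup_def)
  let ?S = "{(measure \<mu>1 E, measure \<mu>0 E) | E. E \<in> sets \<mu>0}"
  have Sb: "\<And>a b. (a, b) \<in> ?S \<Longrightarrow> 0 \<le> a \<and> 0 \<le> b \<and> b \<le> 1"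
    using prob_space.prob_le_1[OF assms(1)] by auto
  have Sne: "?S \<noteq> {}" by blast
  have low: "\<exists>(a, b)\<in>?S. a \<le> 2 * \<epsilon> * b \<and> 0 < b" if ep: "0 < \<epsilon>" "\<epsilon> \<le> 1/2" for \<epsilon>
  proof -
    obtain E where "E \<in> sets \<mu>0" "measure \<mu>1 E \<le> 2 * \<epsilon> * measure \<mu>0 E" "0 < measure \<mu>0 E"
      using low_set[OF assms(5) ep unbounded_below[rule_format, OF ep(1)]] by blast
    then show ?thesis by blast
  qed
  show ?thesis
  proof (intro exI conjI allI impI)
    show "(\<lambda>n. 1 - Inf (Bset ?S n)) \<longlonglongrightarrow> 1" by (rule Bset_tendsto[OF Sb Sne low])
    fix n V F L
    assume H: "finite V \<and> card V = n \<and>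
      (\<forall>u\<in>V. info_algebra \<mu>0 \<mu>1 V u (F u)) \<and>
      (\<forall>u\<in>V. \<forall>w\<in>V. \<exists>g \<in> measurable (F w) (count_space UNIV).
         AE \<omega> in joint \<mu>0 \<mu>1 V.
           opt_actions (post_belief \<mu>0 \<mu>1 V (F u) \<omega>) = g \<omega>) \<and>
      L \<in> measurable (joint \<mu>0 \<mu>1 V) (count_space UNIV) \<and>
      (\<forall>u\<in>V. AE \<omega> in joint \<mu>0 \<mu>1 V. L \<omega> = opt_actions (post_belief \<mu>0 \<mu>1 V (F u) \<omega>))"
    let ?r = "measure (joint \<mu>0 \<mu>1 V) {\<omega> \<in> space (joint \<mu>0 \<mu>1 V). L \<omega> = {0} \<and> \<not> state \<omega>}
        / measure (joint \<mu>0 \<mu>1 V) {\<omega> \<in> space (joint \<mu>0 \<mu>1 V). \<not> state \<omega>}"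
    have ne: "Bset ?S n \<noteq> {}"
    proof -
      have "0 * real n * measure \<mu>1 {} + (1 - 0 * measure \<mu>0 {}) ^ n \<in> Bset ?S n"
        unfolding Bset_def mem_Collect_eq
        by (rule exI[of _ 0], rule exI[of _ "measure \<mu>1 {}"], rule exI[of _ "measure \<mu>0 {}"]) (auto intro!: exI[of _ "{}"])
      then show ?thesis by blast
    qed
    have "1 - ?r \<le> Inf (Bset ?S n)"
    proof (rule cInf_greatest[OF ne])
      fix y assume "y \<in> Bset ?S n"
      then obtain t E where y: "y = t * real n * measure \<mu>1 E + (1 - t * measure \<mu>0 E) ^ n"
        and t: "0 \<le> t" "t \<le> 1" and E: "E \<in> sets \<mu>0"
        unfolding Bset_def by blast
      have "1 - (t * real (card V) * measure \<mu>1 E + (1 - t * measure \<mu>0 E) ^ card V) \<le> ?r"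
        using main_bound[of V F L E t] H E t by blast
      then show "1 - ?r \<le> y" using H y by simp
    qed
    then show "1 - Inf (Bset ?S n) \<le> ?r" by simp
  qed
qed

end
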